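(* Let $\mathbf{C}$ be the Cantor set with a fixed compatible metric $\mathrm{dist}$, let $X \subset \mathbf{C}$, and let $f : X \to Y$ be a clopen-LC function from $X$ onto a separable metrizable space $Y$ such that $f^{-1}(y)$ is compact for every $y \in Y$. For $n = 1,2,\dots$, let $X_n$ be the union of all fibers $f^{-1}(y)$, $y \in Y$, for which there exist a sequence $y_k \to y$ in $Y$ with $y_k \neq y$ for all $k$ and $y_k \neq y_j$ for $k\ne j$, points $x_k \in f^{-1}(y_k)$, and a point $\tilde{x}_y \in \mathbf{C}$ with $x_k \to \tilde{x}_y$ and $\mathrm{dist}(\tilde{x}_y, f^{-1}(y)) > 1/n$; let $Y_n = f(X_n)$. Let $Y_0 = Y \setminus \bigcup_{n\ge 1} Y_n$ and $X_0 = f^{-1}(Y_0)$. Then $f|_{X_0} : X_0 \to Y_0$ is a closed function.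
   Context: All spaces are separable metrizable. A subset of a topological space is an LC-set if it is the intersection of an open set and a closed set. A function is closed if it maps closed sets to closed sets of its image space. A function $f : X \to Y$ is clopen-LC if for every subset $U \subset X$ that is clopen in $X$, the image $f(U)$ is an LC-set in $Y$. *)

theory Defs
  imports "HOL-Analysis.Analysis"
begin

definition cantor_set :: "real set" where
  "cantor_set = {x. \<exists>d::nat \<Rightarrow> nat. (\<forall>n. d n \<in> {0, 2}) \<and>
                      (\<lambda>n. real (d n) / 3 ^ Suc n) sums x}"

definition lc_set :: "'b::topological_space set \<Rightarrow> 'b set \<Rightarrow> bool" where
  "lc_set Y A \<longleftrightarrow> (\<exists>U F. openin (top_of_set Y) U \<and> closedin (top_of_set Y) F \<and> A = U \<inter> F)"

definition clopen_LC :: "('a::topological_space \<Rightarrow> 'b::topological_space) \<Rightarrow> 'a set \<Rightarrow> 'b set \<Rightarrow> bool" where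
  "clopen_LC f X Y \<longleftrightarrow>
     (\<forall>U. openin (top_of_set X) U \<and> closedin (top_of_set X) U \<longrightarrow> lc_set Y (f ` U))"

definition closed_fun :: "('a::topological_space \<Rightarrow> 'b::topological_space) \<Rightarrow> 'a set \<Rightarrow> 'b set \<Rightarrow> bool" where
  "closed_fun f X Y \<longleftrightarrow>
     (\<forall>F. closedin (top_of_set X) F \<longrightarrow> closedin (top_of_set Y) (f ` F))"

definition X_n :: "'a::metric_space set \<Rightarrow> ('a \<Rightarrow> 'b::metric_space) \<Rightarrow> 'a set \<Rightarrow> 'b set \<Rightarrow> nat \<Rightarrow> 'a set" where
  "X_n C f X Y n = \<Union> {{x \<in> X. f x = y} | y. y \<in> Y \<and>
      (\<exists>yk :: nat \<Rightarrow> 'b. (\<forall>k. yk k \<in> Y) \<and> yk \<longlonglongrightarrow> y \<and> (\<forall>k. yk k \<noteq> y) \<and> inj yk \<and>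
        (\<exists>xk :: nat \<Rightarrow> 'a. (\<forall>k. xk k \<in> X \<and> f (xk k) = yk k) \<and>
          (\<exists>xt \<in> C. xk \<longlonglongrightarrow> xt \<and> infdist xt {x \<in> X. f x = y} > 1 / real n)))}"

definition Y_n :: "'a::metric_space set \<Rightarrow> ('a \<Rightarrow> 'b::metric_space) \<Rightarrow> 'a set \<Rightarrow> 'b set \<Rightarrow> nat \<Rightarrow> 'b set" where
  "Y_n C f X Y n = f ` X_n C f X Y n"

definition Y_0 :: "'a::metric_space set \<Rightarrow> ('a \<Rightarrow> 'b::metric_space) \<Rightarrow> 'a set \<Rightarrow> 'b set \<Rightarrow> 'b set" where
  "Y_0 C f X Y = Y - (\<Union>n\<in>{1..}. Y_n C f X Y n)"

definition X_0 :: "'a::metric_space set \<Rightarrow> ('a \<Rightarrow> 'b::metric_space) \<Rightarrow> 'a set \<Rightarrow> 'b set \<Rightarrow> 'a set" where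
  "X_0 C f X Y = {x \<in> X. f x \<in> Y_0 C f X Y}"

end

theory Submission imports Defs begin

lemma cantor_compact: "compact cantor_set"
proof -
  define D :: "(nat \<Rightarrow> real) set" where "D = PiE UNIV (\<lambda>_. {0,2})"
  define g :: "(nat \<Rightarrow> real) \<Rightarrow> real" where "g = (\<lambda>d. suminf (\<lambda>n. d n / 3 ^ Suc n))"
  have "compactin (product_topology (\<lambda>i. euclidean) UNIV) D"
    unfolding D_def by (subst compactin_PiE) auto
  hence cD: "compact D" by (simp add: euclidean_product_topology compactin_euclidean_iff)
  have bnd: "norm (d n / 3 ^ Suc n) \<le> 2 / 3 ^ Suc n" if "d \<in> D" for d n
    proof -
    have "d n = 0 \<or> d n = 2" using that by (auto simp: D_def PiE_iff)
    thus ?thesis by (auto simp: divide_right_mono)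
  qed
  have sm: "summable (\<lambda>n. 2 / (3::real) ^ Suc n)"
  proof -
    have "summable (\<lambda>n. (2/3) * (1/(3::real)) ^ n)"
      by (intro summable_mult summable_geometric) auto
    thus ?thesis by (simp add: power_divide field_simps)
  qed
  have ul: "uniform_limit D (\<lambda>n d. \<Sum>i<n. d i / 3 ^ Suc i) g sequentially"
    unfolding g_def by (rule Weierstrass_m_test[OF bnd sm])
  have "continuous_on D g"
  proof (rule uniform_limit_theorem[OF _ ul])
    show "\<forall>\<^sub>F n in sequentially. continuous_on D (\<lambda>d. \<Sum>i<n. d i / 3 ^ Suc i)"
    proof (rule always_eventually, rule allI)
      fix n
      have "\<And>i. continuous_on D (\<lambda>d::nat\<Rightarrow>real. d i)"
        by (rule continuous_on_product_then_coordinatewise[OF continuous_on_id])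
      thus "continuous_on D (\<lambda>d. \<Sum>i<n. d i / 3 ^ Suc i)"
        by (intro continuous_on_sum continuous_on_divide continuous_on_const) auto
    qed
  qed simp
  hence "compact (g ` D)" using cD compact_continuous_image by blast
  moreover have "cantor_set = g ` D"
  proof
    show "cantor_set \<subseteq> g ` D"
    proof
      fix x assume "x \<in> cantor_set"
      then obtain d :: "nat \<Rightarrow> nat" where d: "\<forall>n. d n \<in> {0,2}" "(\<lambda>n. real (d n) / 3 ^ Suc n) sums x"
        unfolding cantor_set_def by blast
      have "(\<lambda>n. real (d n)) \<in> D" using d(1) by (force simp: D_def)
      moreover have "x = g (\<lambda>n. real (d n))" using d(2) by (simp add: g_def sums_iff)
      ultimately show "x \<in> g ` D" by blast
    qed
    show "g ` D \<subseteq> cantor_set"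
    proof
      fix x assume "x \<in> g ` D"
      then obtain e where e: "e \<in> D" "x = g e" by blast
      define d :: "nat \<Rightarrow> nat" where "d = (\<lambda>n. if e n = 0 then 0 else 2)"
      have de: "real (d n) = e n" for n using e(1) by (auto simp: D_def d_def PiE_iff)
      have "summable (\<lambda>n. e n / 3 ^ Suc n)"
        by (rule summable_comparison_test[OF _ sm]) (use bnd e(1) in auto)
      hence "(\<lambda>n. real (d n) / 3 ^ Suc n) sums x" using e by (simp add: de g_def summable_sums)
      moreover have "\<forall>n. d n \<in> {0,2}" by (simp add: d_def)
      ultimately show "x \<in> cantor_set" unfolding cantor_set_def by blast
    qed
  qed
  ultimately show ?thesis by simp
qed

lemma inj_seq_limpt:
  fixes y :: "'b::metric_space"
  assumes "y islimpt S"
  obtains z where "\<forall>k. z k \<in> S" "\<forall>k. z k \<noteq> y" "inj z" "z \<longlonglongrightarrow> y"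
proof -
  have "\<forall>e. \<exists>s. e > 0 \<longrightarrow> s \<in> S \<and> s \<noteq> y \<and> dist s y < e"
    using assms by (auto simp: islimpt_approachable)
  then obtain c where c: "\<And>e. e > 0 \<Longrightarrow> c e \<in> S \<and> c e \<noteq> y \<and> dist (c e) y < e"
    by metis
  define z where "z = rec_nat (c 1) (\<lambda>k zk. c (min (1 / (real k + 2)) (dist zk y)))"
  have z0: "z 0 = c 1" and zS: "z (Suc k) = c (min (1 / (real k + 2)) (dist (z k) y))" for k
    by (simp_all add: z_def)
  have P: "z k \<in> S \<and> z k \<noteq> y \<and> dist (z k) y < 1 / (real k + 1)" for k
  proof (induction k)
    case 0 then show ?case using c[of 1] by (simp add: z0)
  next
    case (Suc k)
    hence "min (1 / (real k + 2)) (dist (z k) y) > 0" by auto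
    from c[OF this] show ?case by (simp add: zS add.commute)
  qed
  have dec: "dist (z (Suc k)) y < dist (z k) y" for k
  proof -
    have "min (1 / (real k + 2)) (dist (z k) y) > 0" using P[of k] by auto
    from c[OF this] show ?thesis by (simp add: zS)
  qed
  have mono: "dist (z n) y < dist (z m) y" if "m < n" for m n
    using that
  proof (induction n rule: less_Suc_induct)
    case (1 i) then show ?case using dec[of i] by simp
  next
    case (2 i j k) then show ?case by linarith
  qed
  have "inj z"
  proof (rule injI, rule ccontr)
    fix m n assume "z m = z n" "m \<noteq> n"
    then show False using mono[of m n] mono[of n m] by (cases "m < n") auto
  qed
  moreover have "z \<longlonglongrightarrow> y"
  proof (rule metric_LIMSEQ_I)
    fix r :: real assume "r > 0"
    then obtain N where N: "1 / (real N + 1) < r"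
      by (metis nat_approx_posE add.commute of_nat_Suc)
    have "dist (z n) y < r" if "n \<ge> N" for n
    proof -
      have "1 / (real n + 1) \<le> 1 / (real N + 1)" using that by (simp add: frac_le)
      thus ?thesis using P[of n] N by linarith
    qed
    thus "\<exists>no. \<forall>n\<ge>no. dist (z n) y < r" by blast
  qed
  ultimately show ?thesis using that P by blast
qed

theorem lemma2:
  fixes C :: "'a::metric_space set" and X :: "'a set"
    and f :: "'a \<Rightarrow> 'b::metric_space" and Y :: "'b set"
  assumes "C homeomorphic cantor_set"
    and "X \<subseteq> C"
    and "separable_space (top_of_set Y)"
    and "f ` X = Y"
    and "clopen_LC f X Y"
    and "\<forall>y\<in>Y. compact {x \<in> X. f x = y}"
  shows "closed_fun f (X_0 C f X Y) (Y_0 C f X Y)"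
  unfolding closed_fun_def
proof (intro allI impI)
  fix F assume F: "closedin (top_of_set (X_0 C f X Y)) F"
  have cC: "compact C" using assms(1) cantor_compact homeomorphic_compactness by blast
  have FX0: "F \<subseteq> X_0 C f X Y" using F closedin_imp_subset by blast
  hence FX: "F \<subseteq> X" by (auto simp: X_0_def)
  obtain K where K: "closed K" "F = X_0 C f X Y \<inter> K" using F closedin_closed by metis
  have fF: "f ` F \<subseteq> Y_0 C f X Y" using FX0 by (auto simp: X_0_def)
  show "closedin (top_of_set (Y_0 C f X Y)) (f ` F)"
    unfolding closedin_limpt
  proof (intro conjI fF allI impI)
    fix y assume "y islimpt f ` F \<and> y \<in> Y_0 C f X Y"
    hence lim: "y islimpt f ` F" and yY0: "y \<in> Y_0 C f X Y" by auto
    have yY: "y \<in> Y" using yY0 by (simp add: Y_0_def)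
    obtain z where z: "\<forall>k. z k \<in> f ` F" "\<forall>k. z k \<noteq> y" "inj z" "z \<longlonglongrightarrow> y"
      using inj_seq_limpt[OF lim] by blast
    have "\<forall>k. \<exists>x. x \<in> F \<and> f x = z k" using z(1) by (metis imageE)
    then obtain x where x: "\<And>k. x k \<in> F" "\<And>k. f (x k) = z k" by metis
    have "\<forall>k. x k \<in> C" using x FX assms(2) by blast
    then obtain xt r where xt: "xt \<in> C" "strict_mono r" "(x \<circ> r) \<longlonglongrightarrow> xt"
      using compact_imp_seq_compact[OF cC] unfolding seq_compact_def by metis
    define fib where "fib = {x \<in> X. f x = y}"
    have fibne: "fib \<noteq> {}" using yY assms(4) by (auto simp: fib_def)
    have fibc: "closed fib" using assms(6) yY compact_imp_closed by (auto simp: fib_def)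
    have le: "infdist xt fib \<le> 1 / real n" if "n \<ge> 1" for n
    proof (rule ccontr)
      assume "\<not> ?thesis"
      hence gt: "infdist xt fib > 1 / real n" by simp
      have zr: "(z \<circ> r) \<longlonglongrightarrow> y" using z(4) xt(2) by (simp add: LIMSEQ_subseq_LIMSEQ)
      have injzr: "inj (z \<circ> r)" using z(3) xt(2) strict_mono_imp_inj_on
        by (metis inj_compose)
      have "fib \<subseteq> X_n C f X Y n"
        unfolding X_n_def
      proof (rule Union_upper, simp, rule exI[of _ y], intro conjI)
        show "fib = {x \<in> X. f x = y}" by (simp add: fib_def)
        show "y \<in> Y" by fact
        show "\<exists>yk. (\<forall>k. yk k \<in> Y) \<and> yk \<longlonglongrightarrow> y \<and> (\<forall>k. yk k \<noteq> y) \<and> inj yk \<and>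
          (\<exists>xk. (\<forall>k. xk k \<in> X \<and> f (xk k) = yk k) \<and>
            (\<exists>xt\<in>C. xk \<longlonglongrightarrow> xt \<and> 1 / real n < infdist xt {x \<in> X. f x = y}))"
        proof (intro exI[of _ "z \<circ> r"] conjI allI exI[of _ "x \<circ> r"] bexI[of _ xt])
          show "\<And>k. (z \<circ> r) k \<in> Y" using x FX assms(4) by (metis comp_apply image_eqI subsetD)
          show "\<And>k. (z \<circ> r) k \<noteq> y" using z(2) by simp
          show "\<And>k. (x \<circ> r) k \<in> X" using x FX by auto
          show "\<And>k. f ((x \<circ> r) k) = (z \<circ> r) k" using x by simp
          show "1 / real n < infdist xt {x \<in> X. f x = y}" using gt by (simp add: fib_def)
        qed (use zr injzr xt in auto)
      qed
      moreover obtain x0 where "x0 \<in> fib" using fibne by blast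
      ultimately have "y \<in> Y_n C f X Y n" unfolding Y_n_def by (force simp: fib_def)
      thus False using yY0 that by (auto simp: Y_0_def)
    qed
    have "infdist xt fib = 0"
    proof (rule ccontr)
      assume "infdist xt fib \<noteq> 0"
      hence pos: "infdist xt fib > 0" using infdist_nonneg[of xt fib] by linarith
      then obtain n where n: "1 / real (Suc n) < infdist xt fib"
        using nat_approx_posE by blast
      show False using le[of "Suc n"] n by simp
    qed
    hence "xt \<in> fib" using in_closed_iff_infdist_zero[OF fibc fibne] by simp
    hence xtX0: "xt \<in> X_0 C f X Y" and fxt: "f xt = y" using yY0 by (auto simp: fib_def X_0_def)
    have "\<forall>k. (x \<circ> r) k \<in> K" using x K(2) by auto
    hence "xt \<in> K" using K(1) xt(3) closed_sequentially by blast
    hence "xt \<in> F" using K(2) xtX0 by blast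
    thus "y \<in> f ` F" using fxt by blast
  qed
qed

end
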